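(* Let $f_1,\dots,f_n:\mathbb R^d\to\mathbb R$ be convex and differentiable with $L_i$-Lipschitz gradients ($L_i>0$), $f=\frac1n\sum_if_i$, and let $x_*\in\mathbb R^d$ be any fixed point (in the paper, a minimizer of $F=f+\psi$). For any permutation $\sigma=(\sigma^1,\dots,\sigma^n)$ of $[n]$, $$\sum_{i=2}^n\frac{L_{\sigma^i}}{n}\Big\|\sum_{j=1}^{i-1}\nabla f_{\sigma^j}(x_* )\Big\|^2\le n^2\bar L\sigma^2_{\mathrm{any}}.$$ If $\sigma$ is uniformly distributed over all permutations of $[n]$, then $$\mathbb E\left[\sum_{i=2}^n\frac{L_{\sigma^i}}{n}\Big\|\sum_{j=1}^{i-1}\nabla f_{\sigma^j}(x_* )\Big\|^2\right]\le\frac23n\bar L\sigma^2_{\mathrm{rand}}.$$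
   Context: $\bar L=\frac1n\sum_{i=1}^nL_i$; $\sigma^2_{\mathrm{any}}=\frac1n\sum_{i=1}^n\|\nabla f_i(x_* )\|^2$; $\sigma^2_{\mathrm{rand}}=\sigma^2_{\mathrm{any}}+n\|\nabla f(x_* )\|^2$; $\|\cdot\|$ is the Euclidean norm. *)

theory Defs
  imports "HOL-Analysis.Analysis" "HOL-Probability.Probability_Mass_Function"
begin

text \<open>Indices are 0-based: the components are f 0, ..., f (n-1); a permutation of [n]
  is a bijection of {..<n} (identity outside), i.e. \<sigma> permutes {..<n}.\<close>

definition Lbar :: "nat \<Rightarrow> (nat \<Rightarrow> real) \<Rightarrow> real" where
  "Lbar n L = (\<Sum>i<n. L i) / real n"

definition sigma2_any :: "nat \<Rightarrow> (nat \<Rightarrow> 'a::real_normed_vector) \<Rightarrow> real" where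
  "sigma2_any n g = (\<Sum>i<n. (norm (g i))\<^sup>2) / real n"

text \<open>g i is the gradient of f_i at x_*; the gradient of f = (1/n) sum f_i at x_* is
  (1/n) sum g i.\<close>
definition sigma2_rand :: "nat \<Rightarrow> (nat \<Rightarrow> 'a::real_normed_vector) \<Rightarrow> real" where
  "sigma2_rand n g = sigma2_any n g + real n * (norm (scaleR (1 / real n) (\<Sum>i<n. g i)))\<^sup>2"

text \<open>The shuffling quantity: sum_{i=2}^n (L_{\<sigma>^i}/n) ||sum_{j=1}^{i-1} g_{\<sigma>^j}||^2,
  written 0-based (positions 1..n-1, prefixes over positions 0..i-1).\<close>
definition shuffle_sum :: "nat \<Rightarrow> (nat \<Rightarrow> real) \<Rightarrow> (nat \<Rightarrow> 'a::real_normed_vector) \<Rightarrow> (nat \<Rightarrow> nat) \<Rightarrow> real" where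
  "shuffle_sum n L g \<sigma> = (\<Sum>i\<in>{1..<n}. L (\<sigma> i) / real n * (norm (\<Sum>j<i. g (\<sigma> j)))\<^sup>2)"

end

theory Submission
  imports Defs "HOL-Combinatorics.Multiset_Permutations"
begin

definition V :: "(nat \<Rightarrow> real) \<Rightarrow> (nat \<Rightarrow> 'a::real_normed_vector) \<Rightarrow> nat list \<Rightarrow> real" where
  "V L g xs = (\<Sum>i<length xs. L (xs!i) * (norm (\<Sum>j<i. g (xs!j)))\<^sup>2)"

lemma V_snoc: "V L g (xs @ [x]) = V L g xs + L x * (norm (sum_list (map g xs)))\<^sup>2"
proof -
  have "V L g (xs @ [x]) = (\<Sum>i<length xs. L ((xs@[x])!i) * (norm (\<Sum>j<i. g ((xs@[x])!j)))\<^sup>2)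
     + L x * (norm (\<Sum>j<length xs. g ((xs@[x])!j)))\<^sup>2"
    by (simp add: V_def)
  also have "(\<Sum>i<length xs. L ((xs@[x])!i) * (norm (\<Sum>j<i. g ((xs@[x])!j)))\<^sup>2) = V L g xs"
    unfolding V_def by (intro sum.cong refl) (simp add: nth_append)
  also have "(\<Sum>j<length xs. g ((xs@[x])!j)) = sum_list (map g xs)"
    by (simp add: nth_append sum_list_sum_nth atLeast0LessThan)
  finally show ?thesis .
qed

definition Phi :: "(nat \<Rightarrow> real) \<Rightarrow> (nat \<Rightarrow> 'a::real_inner) \<Rightarrow> nat set \<Rightarrow> real" where
  "Phi L g A = (\<Sum>k\<in>A. L k * ((\<Sum>b\<in>A-{k}. (norm (g b))\<^sup>2) / 6 + (norm (\<Sum>b\<in>A-{k}. g b))\<^sup>2 / 3))"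

lemma sum_norm_diff_sq:
  fixes g :: "nat \<Rightarrow> 'a::real_inner"
  assumes "finite B"
  shows "(\<Sum>x\<in>B. (norm (sum g B - g x))\<^sup>2) = real (card B) * (norm (sum g B))\<^sup>2 - 2 * (norm (sum g B))\<^sup>2 + (\<Sum>x\<in>B. (norm (g x))\<^sup>2)"
proof -
  have e: "(norm (sum g B - g x))\<^sup>2 = (norm (sum g B))\<^sup>2 - 2 * (sum g B \<bullet> g x) + (norm (g x))\<^sup>2" for x
    by (simp add: power2_norm_eq_inner inner_diff_left inner_diff_right inner_commute)
  have "(\<Sum>x\<in>B. sum g B \<bullet> g x) = (norm (sum g B))\<^sup>2"
    by (simp add: power2_norm_eq_inner inner_sum_right)
  then show ?thesis unfolding e using assms
    by (simp add: sum.distrib sum_subtractf sum_distrib_left[symmetric])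
qed

lemma key_identity:
  fixes g :: "nat \<Rightarrow> 'a::real_inner"
  assumes "finite A"
  shows "(\<Sum>x\<in>A. Phi L g (A - {x}) + L x * (norm (\<Sum>b\<in>A-{x}. g b))\<^sup>2) = real (card A) * Phi L g A"
proof -
  define Q where "Q k = (\<Sum>b\<in>A-{k}. (norm (g b))\<^sup>2)" for k
  define G where "G k = (\<Sum>b\<in>A-{k}. g b)" for k
  have sw: "(\<Sum>x\<in>A. Phi L g (A - {x})) = (\<Sum>k\<in>A. \<Sum>x\<in>A-{k}. L k * ((\<Sum>b\<in>A-{x}-{k}. (norm (g b))\<^sup>2) / 6 + (norm (\<Sum>b\<in>A-{x}-{k}. g b))\<^sup>2 / 3))"
  proof -
    have "(\<Sum>x\<in>A. Phi L g (A - {x})) = (\<Sum>x\<in>A. \<Sum>k\<in>A. if k \<noteq> x then L k * ((\<Sum>b\<in>A-{x}-{k}. (norm (g b))\<^sup>2) / 6 + (norm (\<Sum>b\<in>A-{x}-{k}. g b))\<^sup>2 / 3) else 0)"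
    proof (rule sum.cong[OF refl])
      fix x assume "x \<in> A"
      have "A - {x} = {k\<in>A. k \<noteq> x}" by auto
      then show "Phi L g (A - {x}) = (\<Sum>k\<in>A. if k \<noteq> x then L k * ((\<Sum>b\<in>A-{x}-{k}. (norm (g b))\<^sup>2) / 6 + (norm (\<Sum>b\<in>A-{x}-{k}. g b))\<^sup>2 / 3) else 0)"
        unfolding Phi_def by (subst sum.inter_filter[OF assms, symmetric]) (simp only: \<open>A - {x} = _\<close>[symmetric])
    qed
    also have "\<dots> = (\<Sum>k\<in>A. \<Sum>x\<in>A. if k \<noteq> x then L k * ((\<Sum>b\<in>A-{x}-{k}. (norm (g b))\<^sup>2) / 6 + (norm (\<Sum>b\<in>A-{x}-{k}. g b))\<^sup>2 / 3) else 0)"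
      by (rule sum.swap)
    also have "\<dots> = (\<Sum>k\<in>A. \<Sum>x\<in>A-{k}. L k * ((\<Sum>b\<in>A-{x}-{k}. (norm (g b))\<^sup>2) / 6 + (norm (\<Sum>b\<in>A-{x}-{k}. g b))\<^sup>2 / 3))"
    proof (rule sum.cong[OF refl])
      fix k assume "k \<in> A"
      have "A - {k} = {x\<in>A. k \<noteq> x}" by auto
      then show "(\<Sum>x\<in>A. if k \<noteq> x then L k * ((\<Sum>b\<in>A-{x}-{k}. (norm (g b))\<^sup>2) / 6 + (norm (\<Sum>b\<in>A-{x}-{k}. g b))\<^sup>2 / 3) else 0) = (\<Sum>x\<in>A-{k}. L k * ((\<Sum>b\<in>A-{x}-{k}. (norm (g b))\<^sup>2) / 6 + (norm (\<Sum>b\<in>A-{x}-{k}. g b))\<^sup>2 / 3))"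
        by (subst sum.inter_filter[OF assms, symmetric]) (simp only: \<open>A - {k} = _\<close>[symmetric])
    qed
    finally show ?thesis .
  qed
  have per: "(\<Sum>x\<in>A-{k}. L k * ((\<Sum>b\<in>A-{x}-{k}. (norm (g b))\<^sup>2) / 6 + (norm (\<Sum>b\<in>A-{x}-{k}. g b))\<^sup>2 / 3))
      + L k * (norm (G k))\<^sup>2 = real (card A) * (L k * (Q k / 6 + (norm (G k))\<^sup>2 / 3))" if k: "k \<in> A" for k
  proof -
    have fB: "finite (A - {k})" using assms by simp
    have cB: "real (card (A - {k})) = real (card A) - 1" proof -
      have "card A \<ge> 1" using assms k card_0_eq[OF assms] by (cases "card A") auto
      then show ?thesis using assms k by (simp add: card_Diff_singleton_if of_nat_diff)
    qed
    have q: "(\<Sum>b\<in>A-{x}-{k}. (norm (g b))\<^sup>2) = Q k - (norm (g x))\<^sup>2" if "x \<in> A - {k}" for x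
    proof -
      have "A-{x}-{k} = (A-{k})-{x}" by auto
      then show ?thesis unfolding Q_def using that fB by (simp only: sum_diff1) simp
    qed
    have gg: "(\<Sum>b\<in>A-{x}-{k}. g b) = G k - g x" if "x \<in> A - {k}" for x
    proof -
      have "A-{x}-{k} = (A-{k})-{x}" by auto
      then show ?thesis unfolding G_def using that fB by (simp only: sum_diff1) simp
    qed
    have "(\<Sum>x\<in>A-{k}. L k * ((\<Sum>b\<in>A-{x}-{k}. (norm (g b))\<^sup>2) / 6 + (norm (\<Sum>b\<in>A-{x}-{k}. g b))\<^sup>2 / 3))
        = (\<Sum>x\<in>A-{k}. L k * ((Q k - (norm (g x))\<^sup>2) / 6 + (norm (G k - g x))\<^sup>2 / 3))"
      by (intro sum.cong refl) (simp add: q gg)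
    also have "\<dots> = L k * ((real (card (A-{k})) * Q k - Q k) / 6 + (\<Sum>x\<in>A-{k}. (norm (G k - g x))\<^sup>2) / 3)"
      using fB by (simp add: sum_distrib_left[symmetric] sum.distrib sum_subtractf sum_divide_distrib[symmetric] Q_def)
    also have "(\<Sum>x\<in>A-{k}. (norm (G k - g x))\<^sup>2) = real (card (A-{k})) * (norm (G k))\<^sup>2 - 2 * (norm (G k))\<^sup>2 + Q k"
      unfolding G_def Q_def by (rule sum_norm_diff_sq[OF fB])
    finally have E: "(\<Sum>x\<in>A-{k}. L k * ((\<Sum>b\<in>A-{x}-{k}. (norm (g b))\<^sup>2) / 6 + (norm (\<Sum>b\<in>A-{x}-{k}. g b))\<^sup>2 / 3)) = L k * ((real (card (A-{k})) * Q k - Q k) / 6 + (real (card (A-{k})) * (norm (G k))\<^sup>2 - 2 * (norm (G k))\<^sup>2 + Q k) / 3)" .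
    show ?thesis by (subst E) (simp add: cB field_simps)
  qed
  have "(\<Sum>x\<in>A. Phi L g (A - {x}) + L x * (norm (\<Sum>b\<in>A-{x}. g b))\<^sup>2)
     = (\<Sum>k\<in>A. (\<Sum>x\<in>A-{k}. L k * ((\<Sum>b\<in>A-{x}-{k}. (norm (g b))\<^sup>2) / 6 + (norm (\<Sum>b\<in>A-{x}-{k}. g b))\<^sup>2 / 3))
      + L k * (norm (G k))\<^sup>2)"
    by (simp add: sum.distrib sw G_def)
  also have "\<dots> = (\<Sum>k\<in>A. real (card A) * (L k * (Q k / 6 + (norm (G k))\<^sup>2 / 3)))"
    by (intro sum.cong refl per)
  also have "\<dots> = real (card A) * Phi L g A"
    by (simp add: Phi_def sum_distrib_left Q_def G_def)
  finally show ?thesis .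
qed


lemma perm_sum:
  fixes g :: "nat \<Rightarrow> 'a::real_inner"
  shows "finite A \<Longrightarrow> (\<Sum>xs\<in>permutations_of_set A. V L g (rev xs)) = fact (card A) * Phi L g A"
proof (induction "card A" arbitrary: A)
  case 0
  then have "A = {}" by simp
  then show ?case by (simp add: V_def Phi_def)
next
  case (Suc m A)
  then have ne: "A \<noteq> {}" by auto
  have cx: "card (A - {x}) = m" if "x \<in> A" for x using Suc that by simp
  have inner: "(\<Sum>ys\<in>permutations_of_set (A-{x}). V L g (rev (x # ys)))
     = fact m * (Phi L g (A - {x}) + L x * (norm (\<Sum>b\<in>A-{x}. g b))\<^sup>2)" if x: "x \<in> A" for x
  proof -
    have "(\<Sum>ys\<in>permutations_of_set (A-{x}). V L g (rev (x # ys)))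
      = (\<Sum>ys\<in>permutations_of_set (A-{x}). V L g (rev ys) + L x * (norm (\<Sum>b\<in>A-{x}. g b))\<^sup>2)"
    proof (rule sum.cong[OF refl])
      fix ys assume ys: "ys \<in> permutations_of_set (A-{x})"
      have "sum_list (map g (rev ys)) = sum g (set ys)"
        using permutations_of_setD(2)[OF ys] by (simp add: sum.distinct_set_conv_list rev_map[symmetric] sum_list_rev)
      then show "V L g (rev (x # ys)) = V L g (rev ys) + L x * (norm (\<Sum>b\<in>A-{x}. g b))\<^sup>2"
        using permutations_of_setD(1)[OF ys] by (simp add: V_snoc)
    qed
    also have "\<dots> = fact m * Phi L g (A - {x}) + fact m * (L x * (norm (\<Sum>b\<in>A-{x}. g b))\<^sup>2)"
      using Suc.hyps(1)[of "A - {x}"] Suc.prems cx[OF x] by (simp add: sum.distrib)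
    finally show ?thesis by (simp add: algebra_simps)
  qed
  have "(\<Sum>xs\<in>permutations_of_set A. V L g (rev xs))
      = (\<Sum>x\<in>A. \<Sum>xs\<in>(\<lambda>ys. x # ys) ` permutations_of_set (A - {x}). V L g (rev xs))"
    unfolding permutations_of_set_nonempty[OF ne]
    by (rule sum.UNION_disjoint) (use Suc.prems in auto)
  also have "\<dots> = (\<Sum>x\<in>A. \<Sum>ys\<in>permutations_of_set (A - {x}). V L g (rev (x # ys)))"
    by (rule sum.cong[OF refl]) (simp add: sum.reindex inj_on_def)
  also have "\<dots> = (\<Sum>x\<in>A. fact m * (Phi L g (A - {x}) + L x * (norm (\<Sum>b\<in>A-{x}. g b))\<^sup>2))"
    by (intro sum.cong refl inner)
  also have "\<dots> = fact m * (real (card A) * Phi L g A)"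
    by (simp add: sum_distrib_left[symmetric] key_identity[OF Suc.prems])
  also have "\<dots> = fact (card A) * Phi L g A"
    using Suc.hyps(2)[symmetric] by (simp add: algebra_simps)
  finally show ?case .
qed


lemma shuffle_V:
  assumes "0 < n"
  shows "shuffle_sum n L g \<sigma> = V L g (map \<sigma> [0..<n]) / real n"
proof -
  have "V L g (map \<sigma> [0..<n]) = (\<Sum>i<n. L (\<sigma> i) * (norm (\<Sum>j<i. g (\<sigma> j)))\<^sup>2)"
    unfolding V_def by (intro sum.cong refl) auto
  also have "{..<n} = insert 0 {1..<n}" using assms by auto
  also have "(\<Sum>i\<in>insert 0 {1..<n}. L (\<sigma> i) * (norm (\<Sum>j<i. g (\<sigma> j)))\<^sup>2)
      = (\<Sum>i\<in>{1..<n}. L (\<sigma> i) * (norm (\<Sum>j<i. g (\<sigma> j)))\<^sup>2)" by simp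
  finally show ?thesis unfolding shuffle_sum_def
    by (simp add: sum_divide_distrib)
qed

lemma sum_perms_V:
  fixes g :: "nat \<Rightarrow> 'a::real_inner"
  shows "(\<Sum>\<sigma>\<in>{\<sigma>. \<sigma> permutes {..<n}}. V L g (map \<sigma> [0..<n])) = fact n * Phi L g {..<n}"
proof -
  let ?P = "{\<sigma>. \<sigma> permutes {..<n}}"
  let ?phi = "\<lambda>\<sigma>. map \<sigma> [0..<n]"
  have inj: "inj_on ?phi ?P"
  proof (rule inj_onI)
    fix \<sigma> \<tau> assume s: "\<sigma> \<in> ?P" and t: "\<tau> \<in> ?P" and e: "?phi \<sigma> = ?phi \<tau>"
    show "\<sigma> = \<tau>"
    proof
      fix i show "\<sigma> i = \<tau> i"
      proof (cases "i < n")
        case True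
        then have "?phi \<sigma> ! i = ?phi \<tau> ! i" using e by simp
        then show ?thesis using True by simp
      next
        case False
        then show ?thesis using s t by (simp add: permutes_not_in)
      qed
    qed
  qed
  have sub: "?phi ` ?P \<subseteq> permutations_of_set {..<n}"
  proof
    fix xs assume "xs \<in> ?phi ` ?P"
    then obtain \<sigma> where s: "\<sigma> permutes {..<n}" and xs: "xs = ?phi \<sigma>" by auto
    have "set xs = {..<n}" using xs permutes_image[OF s] by (simp add: atLeast0LessThan)
    moreover have "distinct xs" using xs permutes_inj_on[OF s] by (simp add: distinct_map atLeast0LessThan)
    ultimately show "xs \<in> permutations_of_set {..<n}" by auto
  qed
  have img: "?phi ` ?P = permutations_of_set {..<n}"
    by (rule card_subset_eq[OF finite_permutations_of_set sub])
       (simp add: card_image[OF inj] card_permutations)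
  have "(\<Sum>\<sigma>\<in>?P. V L g (?phi \<sigma>)) = (\<Sum>xs\<in>permutations_of_set {..<n}. V L g xs)"
    using sum.reindex[OF inj, of "V L g"] img by simp
  also have "\<dots> = (\<Sum>xs\<in>rev ` permutations_of_set {..<n}. V L g xs)" by simp
  also have "\<dots> = (\<Sum>xs\<in>permutations_of_set {..<n}. V L g (rev xs))"
    by (subst sum.reindex) (auto simp: inj_on_def)
  also have "\<dots> = fact n * Phi L g {..<n}" by (simp add: perm_sum)
  finally show ?thesis .
qed

lemma Phi_bound:
  fixes g :: "nat \<Rightarrow> 'a::real_inner"
  assumes "finite A" "\<And>k. k \<in> A \<Longrightarrow> L k \<ge> 0"
  shows "Phi L g A \<le> 2/3 * (\<Sum>k\<in>A. L k) * ((\<Sum>k\<in>A. (norm (g k))\<^sup>2) + (norm (\<Sum>k\<in>A. g k))\<^sup>2)"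
proof -
  have "Phi L g A \<le> (\<Sum>k\<in>A. L k * (2/3 * ((\<Sum>k\<in>A. (norm (g k))\<^sup>2) + (norm (\<Sum>k\<in>A. g k))\<^sup>2)))"
    unfolding Phi_def
  proof (rule sum_mono, rule mult_left_mono)
    fix k assume k: "k \<in> A"
    define Q where "Q = (\<Sum>b\<in>A-{k}. (norm (g b))\<^sup>2)"
    define G where "G = (\<Sum>b\<in>A-{k}. g b)"
    have s2: "(\<Sum>k\<in>A. (norm (g k))\<^sup>2) = (norm (g k))\<^sup>2 + Q"
      unfolding Q_def using assms(1) k by (simp add: sum.remove)
    have s1: "(\<Sum>k\<in>A. g k) = g k + G"
      unfolding G_def using assms(1) k by (simp add: sum.remove)
    have Q0: "Q \<ge> 0" unfolding Q_def by (simp add: sum_nonneg)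
    have "norm G \<le> norm (g k + G) + norm (g k)"
      using norm_triangle_ineq4[of "g k + G" "g k"] by simp
    then have "(norm G)\<^sup>2 \<le> (norm (g k + G) + norm (g k))\<^sup>2"
      by (simp add: power_mono)
    also have "\<dots> \<le> 2 * (norm (g k + G))\<^sup>2 + 2 * (norm (g k))\<^sup>2"
      using sum_squared_le_sum_of_squares_2 by (smt (verit, best) sum_power2_ge_zero power2_sum zero_le_power2 power2_diff)
    finally have "(norm G)\<^sup>2 \<le> 2 * (norm (g k + G))\<^sup>2 + 2 * (norm (g k))\<^sup>2" .
    then show "(\<Sum>b\<in>A-{k}. (norm (g b))\<^sup>2) / 6 + (norm (\<Sum>b\<in>A-{k}. g b))\<^sup>2 / 3
        \<le> 2/3 * ((\<Sum>k\<in>A. (norm (g k))\<^sup>2) + (norm (\<Sum>k\<in>A. g k))\<^sup>2)"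
      unfolding s1 s2 Q_def[symmetric] G_def[symmetric] using Q0 by (auto simp: field_simps)
    show "0 \<le> L k" using assms(2) k .
  qed
  also have "\<dots> = 2/3 * (\<Sum>k\<in>A. L k) * ((\<Sum>k\<in>A. (norm (g k))\<^sup>2) + (norm (\<Sum>k\<in>A. g k))\<^sup>2)"
    by (simp only: sum_distrib_right[symmetric])
  finally show ?thesis .
qed


theorem mainTheorem13:
  fixes n :: nat
    and f :: "nat \<Rightarrow> 'a::euclidean_space \<Rightarrow> real"
    and grad :: "nat \<Rightarrow> 'a \<Rightarrow> 'a"
    and L :: "nat \<Rightarrow> real"
    and xs :: 'a
  assumes n_pos: "0 < n"
    and convex: "\<And>i. i < n \<Longrightarrow> convex_on UNIV (f i)"
    and grad: "\<And>i x. i < n \<Longrightarrow> (f i has_derivative (\<lambda>h. grad i x \<bullet> h)) (at x)"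
    and L_pos: "\<And>i. i < n \<Longrightarrow> L i > 0"
    and lipschitz: "\<And>i x y. i < n \<Longrightarrow> norm (grad i x - grad i y) \<le> L i * norm (x - y)"
  shows "(\<forall>\<sigma>. \<sigma> permutes {..<n} \<longrightarrow>
            shuffle_sum n L (\<lambda>i. grad i xs) \<sigma>
              \<le> (real n)\<^sup>2 * Lbar n L * sigma2_any n (\<lambda>i. grad i xs))
       \<and> measure_pmf.expectation (pmf_of_set {\<sigma>. \<sigma> permutes {..<n}})
            (\<lambda>\<sigma>. shuffle_sum n L (\<lambda>i. grad i xs) \<sigma>)
           \<le> 2 / 3 * real n * Lbar n L * sigma2_rand n (\<lambda>i. grad i xs)"
proof -
  define g where "g = (\<lambda>i. grad i xs)"
  define S2 where "S2 = (\<Sum>k<n. (norm (g k))\<^sup>2)"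
  define S1 where "S1 = (\<Sum>k<n. g k)"
  have np: "real n > 0" using n_pos by simp
  have L0: "\<And>i. i < n \<Longrightarrow> L i \<ge> 0" using L_pos by (simp add: less_imp_le)
  have part1: "shuffle_sum n L g \<sigma> \<le> (\<Sum>i<n. L i) * S2" if s: "\<sigma> permutes {..<n}" for \<sigma>
  proof -
    define N1 where "N1 = (\<Sum>k<n. norm (g k))"
    have N1sq: "N1\<^sup>2 \<le> S2 * real n"
      unfolding N1_def S2_def using sum_squared_le_sum_of_squares[of "\<lambda>k. norm (g k)" "{..<n}"] by simp
    have sn: "\<sigma> i < n" if "i < n" for i using permutes_in_image[OF s] that by simp
    have bnd: "norm (\<Sum>j<i. g (\<sigma> j)) \<le> N1" if "i < n" for i
    proof -
      have "norm (\<Sum>j<i. g (\<sigma> j)) \<le> (\<Sum>j<i. norm (g (\<sigma> j)))" by (rule norm_sum)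
      also have "\<dots> \<le> (\<Sum>j<n. norm (g (\<sigma> j)))"
        by (rule sum_mono2) (use that in auto)
      also have "\<dots> = N1" unfolding N1_def
        using sum.permute[OF s, of "\<lambda>k. norm (g k)"] by (simp add: comp_def)
      finally show ?thesis .
    qed
    have "shuffle_sum n L g \<sigma> \<le> (\<Sum>i\<in>{1..<n}. L (\<sigma> i) * S2)"
      unfolding shuffle_sum_def
    proof (rule sum_mono)
      fix i assume i: "i \<in> {1..<n}"
      have Li: "L (\<sigma> i) \<ge> 0" using L0 sn i by auto
      have "(norm (\<Sum>j<i. g (\<sigma> j)))\<^sup>2 \<le> N1\<^sup>2"
        using bnd[of i] i by (intro power_mono) auto
      also have "\<dots> \<le> S2 * real n" by (rule N1sq)
      finally have "(norm (\<Sum>j<i. g (\<sigma> j)))\<^sup>2 / real n \<le> S2"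
        using np by (simp add: divide_le_eq)
      then have "L (\<sigma> i) * ((norm (\<Sum>j<i. g (\<sigma> j)))\<^sup>2 / real n) \<le> L (\<sigma> i) * S2"
        by (rule mult_left_mono) (use Li in auto)
      then show "L (\<sigma> i) / real n * (norm (\<Sum>j<i. g (\<sigma> j)))\<^sup>2 \<le> L (\<sigma> i) * S2"
        by simp
    qed
    also have "\<dots> \<le> (\<Sum>i<n. L (\<sigma> i) * S2)"
      by (rule sum_mono2) (auto intro!: mult_nonneg_nonneg L0 sn simp: S2_def sum_nonneg)
    also have "\<dots> = (\<Sum>i<n. L i) * S2"
      using sum.permute[OF s, of "\<lambda>k. L k * S2"] by (simp add: comp_def sum_distrib_right)
    finally show ?thesis .
  qed
  have rhs1: "(real n)\<^sup>2 * Lbar n L * sigma2_any n g = (\<Sum>i<n. L i) * S2"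
    unfolding Lbar_def sigma2_any_def S2_def using np by (simp add: power2_eq_square)
  let ?P = "{\<sigma>. \<sigma> permutes {..<n}}"
  have Pfin: "finite ?P" by (rule finite_permutations) simp
  have Pne: "?P \<noteq> {}" using permutes_id by blast
  have cardP: "card ?P = fact n" by (rule card_permutations) auto
  have "measure_pmf.expectation (pmf_of_set ?P) (\<lambda>\<sigma>. shuffle_sum n L g \<sigma>)
      = (\<Sum>\<sigma>\<in>?P. shuffle_sum n L g \<sigma>) / real (card ?P)"
    by (rule integral_pmf_of_set[OF Pne Pfin])
  also have "(\<Sum>\<sigma>\<in>?P. shuffle_sum n L g \<sigma>) = (\<Sum>\<sigma>\<in>?P. V L g (map \<sigma> [0..<n])) / real n"
    by (simp add: shuffle_V[OF n_pos] sum_divide_distrib)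
  also have "\<dots> = fact n * Phi L g {..<n} / real n" by (simp add: sum_perms_V)
  finally have E: "measure_pmf.expectation (pmf_of_set ?P) (\<lambda>\<sigma>. shuffle_sum n L g \<sigma>) = Phi L g {..<n} / real n"
    using cardP by simp
  have Pb: "Phi L g {..<n} \<le> 2/3 * (\<Sum>i<n. L i) * (S2 + (norm S1)\<^sup>2)"
    unfolding S1_def S2_def by (rule Phi_bound) (auto intro: L0)
  have rhs2: "2 / 3 * real n * Lbar n L * sigma2_rand n g = 2/3 * (\<Sum>i<n. L i) * (S2 + (norm S1)\<^sup>2) / real n"
    unfolding Lbar_def sigma2_rand_def sigma2_any_def S2_def S1_def using np
    by (simp add: power2_eq_square field_simps)
  have part2: "measure_pmf.expectation (pmf_of_set ?P) (\<lambda>\<sigma>. shuffle_sum n L g \<sigma>)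
      \<le> 2 / 3 * real n * Lbar n L * sigma2_rand n g"
    unfolding E rhs2 using divide_right_mono[OF Pb, of "real n"] np by simp
  show ?thesis using part1 part2 rhs1 unfolding g_def by auto
qed

end
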